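(* Let $n\ge5$, $\Delta\subset B_n$ a proper ideal, and $2\le k\le\lfloor\frac{n-1}2\rfloor$. The following are equivalent: (1) $g_k(\mathrm{Bier}(B_n,\Delta))=0$; (2) $f_k(\Delta)=0$ or $f_{n-k}(\Delta)=\binom nk$; (3) $\mathrm{Bier}(B_n,\Delta)$ is obtained (up to isomorphism) from the boundary complex of the $(n-1)$-simplex by a sequence of bistellar $i$-flips with $i\le k-2$ at every flip.
   Context: $B_n$ is the Boolean lattice of subsets of $[1,n]$. A proper ideal $\Delta\subset B_n$ is a nonempty family of subsets of $[1,n]$ closed under taking subsets with $[1,n]\notin\Delta$; $f_i(\Delta)$ is the number of sets of cardinality $i$ in $\Delta$. The Bier sphere $\mathrm{Bier}(B_n,\Delta)$ is the simplicial complex whose faces are the pairs $(B,C)$ with $B\subsetneq C\subseteq[1,n]$, $B\in\Delta$, $C\notin\Delta$, with $(B',C')$ a face of $(B,C)$ iff $B'\subseteq B$ and $C\subseteq C'$ (concretely $(B,C)$ is the vertex set $B\sqcup\{\bar d:d\notin C\}$ on $[1,n]\sqcup\{\bar1,\dots,\bar n\}$); it is a simplicial $(n-2)$-sphere. For a complex $\Gamma$ whose facets have $n-1$ vertices, $f_j(\Gamma)$ is the number of faces with $j$ vertices, $h_i(\Gamma):=\sum_{j=0}^{n-1}(-1)^{i+j}\binom{n-1-j}{n-1-i}f_j(\Gamma)$ ($0\le i\le n-1$; $h_i:=0$ otherwise), and $g_i(\Gamma):=h_i(\Gamma)-h_{i-1}(\Gamma)$. Bistellar flip: if $\Gamma$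 is a simplicial $d$-manifold, $A$ a $(d-i)$-dimensional face ($0\le i\le d$) whose link is the boundary $\partial B$ of an $i$-simplex $B$ that is not a face of $\Gamma$, then $\Phi_A(\Gamma):=(\Gamma\setminus(A*\partial B))\cup(\partial A*B)$ is a bistellar $i$-flip, where $*$ denotes join. *)

theory Defs
  imports Main
begin

definition proper_ideal :: "nat \<Rightarrow> nat set set \<Rightarrow> bool" where
  "proper_ideal n \<Delta> \<longleftrightarrow> \<Delta> \<noteq> {} \<and> \<Delta> \<subseteq> Pow {1..n}
     \<and> (\<forall>A\<in>\<Delta>. \<forall>B. B \<subseteq> A \<longrightarrow> B \<in> \<Delta>) \<and> {1..n} \<notin> \<Delta>"

definition fnum :: "'v set set \<Rightarrow> nat \<Rightarrow> nat" where
  "fnum \<Gamma> j = card {F \<in> \<Gamma>. card F = j}"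

text \<open>Bier sphere: vertex d is Inl d, vertex bar d is Inr d.
  Face (B,C) is the vertex set B \<union> {bar d | d \<notin> C}.\<close>
definition bier :: "nat \<Rightarrow> nat set set \<Rightarrow> (nat + nat) set set" where
  "bier n \<Delta> = {Inl ` B \<union> Inr ` ({1..n} - C) | B C.
      B \<subset> C \<and> C \<subseteq> {1..n} \<and> B \<in> \<Delta> \<and> C \<notin> \<Delta>}"

text \<open>h-vector of a complex whose facets have m vertices.\<close>
definition hnum :: "nat \<Rightarrow> 'v set set \<Rightarrow> nat \<Rightarrow> int" where
  "hnum m \<Gamma> i = (if i \<le> m then
      (\<Sum>j=0..m. (-1)^(i+j) * int ((m - j) choose (m - i)) * int (fnum \<Gamma> j)) else 0)"

definition gnum :: "nat \<Rightarrow> 'v set set \<Rightarrow> nat \<Rightarrow> int" where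
  "gnum m \<Gamma> i = hnum m \<Gamma> i - (if i = 0 then 0 else hnum m \<Gamma> (i - 1))"

definition link :: "'v set set \<Rightarrow> 'v set \<Rightarrow> 'v set set" where
  "link \<Gamma> A = {F \<in> \<Gamma>. F \<inter> A = {} \<and> F \<union> A \<in> \<Gamma>}"

definition join :: "'v set set \<Rightarrow> 'v set set \<Rightarrow> 'v set set" where
  "join K L = {X \<union> Y | X Y. X \<in> K \<and> Y \<in> L}"

definition bdry :: "'v set \<Rightarrow> 'v set set" where
  "bdry V = {F. F \<subset> V}"

definition bistellar_flip :: "nat \<Rightarrow> nat \<Rightarrow> 'v set set \<Rightarrow> 'v set set \<Rightarrow> bool" where
  "bistellar_flip d i \<Gamma> \<Gamma>' \<longleftrightarrow> i \<le> d \<and> (\<exists>A B.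
      A \<in> \<Gamma> \<and> finite A \<and> card A = d - i + 1 \<and> finite B \<and> card B = i + 1 \<and>
      A \<inter> B = {} \<and> B \<notin> \<Gamma> \<and> link \<Gamma> A = bdry B \<and>
      \<Gamma>' = (\<Gamma> - join (Pow A) (bdry B)) \<union> join (bdry A) (Pow B))"

definition flip_step :: "nat \<Rightarrow> nat \<Rightarrow> 'v set set \<Rightarrow> 'v set set \<Rightarrow> bool" where
  "flip_step d k \<Gamma> \<Gamma>' \<longleftrightarrow> (\<exists>i. i \<le> k - 2 \<and> bistellar_flip d i \<Gamma> \<Gamma>')"

definition cx_iso :: "'v set set \<Rightarrow> 'w set set \<Rightarrow> bool" where
  "cx_iso \<Gamma> \<Gamma>' \<longleftrightarrow> (\<exists>g. inj_on g (\<Union>\<Gamma>) \<and> (\<lambda>F. g ` F) ` \<Gamma> = \<Gamma>')"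

end

theory Submission
  imports Defs
begin


definition wt :: "nat \<Rightarrow> nat \<Rightarrow> nat \<Rightarrow> int" where
  "wt n k j = (-1)^(k+j) * int ((n - j) choose (n - k))"

definition GG :: "nat \<Rightarrow> nat \<Rightarrow> 'v set set \<Rightarrow> int" where
  "GG n k \<Gamma> = (\<Sum>F\<in>\<Gamma>. wt n k (card F))"

lemma L1:
  assumes "finite P"
  shows "(\<Sum>Y\<in>Pow P. (-1::int)^card Y * int ((card P - card Y) choose r)) = (if card P = r then 1 else 0)"
  using assms
proof (induction P arbitrary: r rule: finite_induct)
  case empty
  then show ?case by simp
next
  case (insert x P)
  have pw: "Pow (insert x P) = Pow P \<union> insert x ` Pow P" by (rule Pow_insert)
  have disj: "Pow P \<inter> insert x ` Pow P = {}" using insert.hyps by auto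
  have inj: "inj_on (insert x) (Pow P)"
  proof (rule inj_onI)
    fix Y Z assume "Y \<in> Pow P" "Z \<in> Pow P" "insert x Y = insert x Z"
    moreover have "x \<notin> Y" "x \<notin> Z" using insert.hyps \<open>Y \<in> Pow P\<close> \<open>Z \<in> Pow P\<close> by auto
    ultimately show "Y = Z" by (metis insert_ident)
  qed
  have fin: "finite (Pow P)" using insert.hyps by simp
  have cardi: "\<And>Y. Y \<in> Pow P \<Longrightarrow> card (insert x Y) = Suc (card Y)"
    using insert.hyps by (meson PowD card_insert_disjoint finite_subset subsetD)
  have cle: "\<And>Y. Y \<in> Pow P \<Longrightarrow> card Y \<le> card P"
    using insert.hyps by (simp add: card_mono)
  have "(\<Sum>Y\<in>Pow (insert x P). (-1::int)^card Y * int ((card (insert x P) - card Y) choose r))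
      = (\<Sum>Y\<in>Pow P. (-1::int)^card Y * int ((Suc (card P) - card Y) choose r))
      + (\<Sum>Y\<in>Pow P. (-1::int)^Suc (card Y) * int ((card P - card Y) choose r))"
    unfolding pw using insert.hyps fin disj
    apply (subst sum.union_disjoint)
       apply simp apply simp apply simp
    apply (subst sum.reindex[OF inj])
    apply simp
    apply (rule sum.cong[OF refl])
    apply (simp add: cardi)
    done
  also have "\<dots> = (\<Sum>Y\<in>Pow P. (-1::int)^card Y * (int ((Suc (card P) - card Y) choose r) - int ((card P - card Y) choose r)))"
    by (simp add: sum_subtractf[symmetric] sum.distrib[symmetric] algebra_simps)
  finally have eq: "(\<Sum>Y\<in>Pow (insert x P). (-1::int)^card Y * int ((card (insert x P) - card Y) choose r))
     = (\<Sum>Y\<in>Pow P. (-1::int)^card Y * (int ((Suc (card P) - card Y) choose r) - int ((card P - card Y) choose r)))" .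
  show ?case
  proof (cases r)
    case 0
    then show ?thesis unfolding eq using insert.hyps by simp
  next
    case (Suc r')
    have "\<And>Y. Y \<in> Pow P \<Longrightarrow> int ((Suc (card P) - card Y) choose r) - int ((card P - card Y) choose r)
          = int ((card P - card Y) choose r')"
      using cle Suc by (simp add: Suc_diff_le)
    then have "(\<Sum>Y\<in>Pow P. (-1::int)^card Y * (int ((Suc (card P) - card Y) choose r) - int ((card P - card Y) choose r)))
       = (\<Sum>Y\<in>Pow P. (-1::int)^card Y * int ((card P - card Y) choose r'))"
      by (intro sum.cong) auto
    then show ?thesis unfolding eq using insert Suc by simp
  qed
qed

lemma L2:
  assumes "finite P"
  shows "(\<Sum>Z\<in>Pow P. (-1::int)^card Z * int (card Z choose r)) = (if card P = r then (-1)^r else 0)"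
  using assms
proof (induction P arbitrary: r rule: finite_induct)
  case empty
  then show ?case by simp
next
  case (insert x P)
  have pw: "Pow (insert x P) = Pow P \<union> insert x ` Pow P" by (rule Pow_insert)
  have disj: "Pow P \<inter> insert x ` Pow P = {}" using insert.hyps by auto
  have inj: "inj_on (insert x) (Pow P)"
  proof (rule inj_onI)
    fix Y Z assume "Y \<in> Pow P" "Z \<in> Pow P" "insert x Y = insert x Z"
    moreover have "x \<notin> Y" "x \<notin> Z" using insert.hyps \<open>Y \<in> Pow P\<close> \<open>Z \<in> Pow P\<close> by auto
    ultimately show "Y = Z" by (metis insert_ident)
  qed
  have fin: "finite (Pow P)" using insert.hyps by simp
  have cardi: "\<And>Y. Y \<in> Pow P \<Longrightarrow> card (insert x Y) = Suc (card Y)"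
    using insert.hyps by (meson PowD card_insert_disjoint finite_subset subsetD)
  have "(\<Sum>Z\<in>Pow (insert x P). (-1::int)^card Z * int (card Z choose r))
      = (\<Sum>Y\<in>Pow P. (-1::int)^card Y * int (card Y choose r))
      + (\<Sum>Y\<in>Pow P. (-1::int)^Suc (card Y) * int (Suc (card Y) choose r))"
    unfolding pw using insert.hyps fin disj
    apply (subst sum.union_disjoint)
       apply simp apply simp apply simp
    apply (subst sum.reindex[OF inj])
    apply simp
    apply (rule sum.cong[OF refl])
    apply (simp add: cardi)
    done
  also have "\<dots> = (\<Sum>Y\<in>Pow P. (-1::int)^card Y * (int (card Y choose r) - int (Suc (card Y) choose r)))"
    by (simp add: sum_subtractf[symmetric] sum.distrib[symmetric] algebra_simps)
  finally have eq: "(\<Sum>Z\<in>Pow (insert x P). (-1::int)^card Z * int (card Z choose r))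
     = (\<Sum>Y\<in>Pow P. (-1::int)^card Y * (int (card Y choose r) - int (Suc (card Y) choose r)))" .
  show ?case
  proof (cases r)
    case 0
    then show ?thesis unfolding eq using insert.hyps by simp
  next
    case (Suc r')
    have "(\<Sum>Y\<in>Pow P. (-1::int)^card Y * (int (card Y choose r) - int (Suc (card Y) choose r)))
       = - (\<Sum>Y\<in>Pow P. (-1::int)^card Y * int (card Y choose r'))"
      by (simp add: Suc sum_negf[symmetric])
    then show ?thesis unfolding eq using insert Suc by simp
  qed
qed

lemma gnum_GG:
  assumes fin: "finite \<Gamma>" and cd: "\<forall>F\<in>\<Gamma>. card F \<le> n - 1" and k1: "1 \<le> k" and kn: "k \<le> n - 1"
  shows "gnum (n - 1) \<Gamma> k = GG n k \<Gamma>"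
proof -
  obtain k0 where k0: "k = Suc k0" using k1 by (cases k) auto
  obtain m where m: "n = Suc m" using kn k1 by (cases n) auto
  have "gnum (n - 1) \<Gamma> k = (\<Sum>j=0..m. wt n k j * int (fnum \<Gamma> j))"
    unfolding gnum_def hnum_def using kn k1
    apply (simp add: m k0 sum_subtractf[symmetric])
    apply (rule sum.cong[OF refl])
    apply (simp add: wt_def m k0 Suc_diff_le algebra_simps)
    apply (subgoal_tac "m - k0 = Suc (m - Suc k0)")
     apply (simp add: algebra_simps)
    apply simp
    done
  also have "\<dots> = (\<Sum>j=0..m. \<Sum>F\<in>{F. F \<in> \<Gamma> \<and> card F = j}. wt n k (card F))"
    unfolding fnum_def by (intro sum.cong refl) simp
  also have "\<dots> = GG n k \<Gamma>"
    unfolding GG_def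
    by (rule sum.group) (use fin cd m in auto)
  finally show ?thesis .
qed



definition good :: "nat \<Rightarrow> 'v set set \<Rightarrow> bool" where
  "good n \<Gamma> \<longleftrightarrow> finite \<Gamma> \<and> (\<forall>F\<in>\<Gamma>. finite F \<and> card F \<le> n - 1) \<and> (\<forall>F\<in>\<Gamma>. \<forall>G. G \<subseteq> F \<longrightarrow> G \<in> \<Gamma>)"

lemma join_Pow_bdry:
  assumes "A \<inter> B = {}"
  shows "join (Pow A) (bdry B) = {F. F \<subseteq> A \<union> B \<and> \<not> B \<subseteq> F}"
proof (intro set_eqI iffI)
  fix F assume "F \<in> join (Pow A) (bdry B)"
  then obtain X Y where "F = X \<union> Y" "X \<subseteq> A" "Y \<subset> B" unfolding join_def bdry_def by auto
  then show "F \<in> {F. F \<subseteq> A \<union> B \<and> \<not> B \<subseteq> F}" using assms by auto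
next
  fix F assume F: "F \<in> {F. F \<subseteq> A \<union> B \<and> \<not> B \<subseteq> F}"
  then have "F = (F \<inter> A) \<union> (F \<inter> B)" "F \<inter> A \<in> Pow A" "F \<inter> B \<in> bdry B" unfolding bdry_def by auto
  then show "F \<in> join (Pow A) (bdry B)" unfolding join_def by blast
qed

lemma join_bdry_Pow:
  assumes "A \<inter> B = {}"
  shows "join (bdry A) (Pow B) = {F. F \<subseteq> A \<union> B \<and> \<not> A \<subseteq> F}"
proof (intro set_eqI iffI)
  fix F assume "F \<in> join (bdry A) (Pow B)"
  then obtain X Y where "F = X \<union> Y" "X \<subset> A" "Y \<subseteq> B" unfolding join_def bdry_def by auto
  then show "F \<in> {F. F \<subseteq> A \<union> B \<and> \<not> A \<subseteq> F}" using assms by auto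
next
  fix F assume F: "F \<in> {F. F \<subseteq> A \<union> B \<and> \<not> A \<subseteq> F}"
  then have "F = (F \<inter> A) \<union> (F \<inter> B)" "F \<inter> A \<in> bdry A" "F \<inter> B \<in> Pow B" unfolding bdry_def by auto
  then show "F \<in> join (bdry A) (Pow B)" unfolding join_def by blast
qed

lemma GG_half:
  assumes fA: "finite A" and fB: "finite B" and dj: "A \<inter> B = {}" and cn: "card A + card B = n"
    and cb: "card B \<noteq> n - k" and kn: "k < n"
  shows "GG n k {F. F \<subseteq> A \<union> B \<and> A \<subseteq> F \<and> \<not> B \<subseteq> F} = 0"
proof -
  have S: "{F. F \<subseteq> A \<union> B \<and> A \<subseteq> F \<and> \<not> B \<subseteq> F} = (\<lambda>Y. A \<union> Y) ` (Pow B - {B})"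
  proof (intro set_eqI iffI)
    fix F assume "F \<in> {F. F \<subseteq> A \<union> B \<and> A \<subseteq> F \<and> \<not> B \<subseteq> F}"
    then have "F = A \<union> (F \<inter> B)" "F \<inter> B \<in> Pow B - {B}" by auto
    then show "F \<in> (\<lambda>Y. A \<union> Y) ` (Pow B - {B})" by blast
  next
    fix F assume "F \<in> (\<lambda>Y. A \<union> Y) ` (Pow B - {B})"
    then obtain Y where "F = A \<union> Y" "Y \<subseteq> B" "Y \<noteq> B" by auto
    then show "F \<in> {F. F \<subseteq> A \<union> B \<and> A \<subseteq> F \<and> \<not> B \<subseteq> F}" using dj by auto
  qed
  have inj: "inj_on (\<lambda>Y. A \<union> Y) (Pow B)"
  proof (rule inj_onI)
    fix Y Z assume "Y \<in> Pow B" "Z \<in> Pow B" "A \<union> Y = A \<union> Z"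
    then have "(A \<union> Y) \<inter> B = (A \<union> Z) \<inter> B" by simp
    then show "Y = Z" using dj \<open>Y \<in> Pow B\<close> \<open>Z \<in> Pow B\<close> by auto
  qed
  have inj2: "inj_on (\<lambda>Y. A \<union> Y) (Pow B - {B})" using inj by (rule inj_on_subset) auto
  have cardU: "\<And>Y. Y \<in> Pow B \<Longrightarrow> card (A \<union> Y) = card A + card Y"
    using fA fB dj by (metis PowD card_Un_disjoint disjoint_iff finite_subset subsetD)
  have "GG n k {F. F \<subseteq> A \<union> B \<and> A \<subseteq> F \<and> \<not> B \<subseteq> F} = (\<Sum>Y\<in>Pow B - {B}. wt n k (card (A \<union> Y)))"
    unfolding GG_def S by (subst sum.reindex[OF inj2]) simp
  also have "\<dots> = (\<Sum>Y\<in>Pow B. wt n k (card (A \<union> Y))) - wt n k (card (A \<union> B))"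
    using fB by (subst sum_diff1) auto
  also have "wt n k (card (A \<union> B)) = 0"
    using cardU[of B] cn kn by (simp add: wt_def)
  also have "(\<Sum>Y\<in>Pow B. wt n k (card (A \<union> Y))) = (\<Sum>Y\<in>Pow B. (-1)^(k + card A) * ((-1::int)^card Y * int ((card B - card Y) choose (n - k))))"
  proof (rule sum.cong[OF refl])
    fix Y assume Y: "Y \<in> Pow B"
    have "card Y \<le> card B" using Y fB by (simp add: card_mono)
    then have "n - (card A + card Y) = card B - card Y" using cn by simp
    then show "wt n k (card (A \<union> Y)) = (-1)^(k + card A) * ((-1::int)^card Y * int ((card B - card Y) choose (n - k)))"
      unfolding wt_def cardU[OF Y] by (simp add: power_add)
  qed
  also have "\<dots> = (-1)^(k + card A) * (\<Sum>Y\<in>Pow B. (-1::int)^card Y * int ((card B - card Y) choose (n - k)))"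
    by (simp add: sum_distrib_left)
  also have "\<dots> = 0" using L1[OF fB, of "n - k"] cb by simp
  finally show ?thesis by simp
qed



lemma flip_good:
  assumes g: "good n \<Gamma>" and fl: "bistellar_flip (n - 2) i \<Gamma> \<Gamma>'" and n2: "2 \<le> n"
    and ik: "i + 2 \<le> k" and kn: "2 * k + 1 \<le> n"
  shows "good n \<Gamma>' \<and> GG n k \<Gamma>' = GG n k \<Gamma>"
proof -
  from fl obtain A B where id: "i \<le> n - 2" and AG: "A \<in> \<Gamma>" and fA: "finite A" and cA: "card A = n - 2 - i + 1"
    and fB: "finite B" and cB: "card B = i + 1" and dj: "A \<inter> B = {}" and BG: "B \<notin> \<Gamma>"
    and lk: "link \<Gamma> A = bdry B"
    and G': "\<Gamma>' = (\<Gamma> - join (Pow A) (bdry B)) \<union> join (bdry A) (Pow B)"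
    unfolding bistellar_flip_def by blast
  have finG: "finite \<Gamma>" and cG: "\<forall>F\<in>\<Gamma>. finite F \<and> card F \<le> n - 1"
    and dc: "\<And>F G. F \<in> \<Gamma> \<Longrightarrow> G \<subseteq> F \<Longrightarrow> G \<in> \<Gamma>" using g unfolding good_def by auto
  have cn: "card A + card B = n" using cA cB id n2 by simp
  have cAB: "card (A \<union> B) = n" using cn fA fB dj by (simp add: card_Un_disjoint)
  have lk1: "\<And>Y. Y \<subset> B \<Longrightarrow> Y \<union> A \<in> \<Gamma>"
  proof -
    fix Y assume "Y \<subset> B"
    then have "Y \<in> link \<Gamma> A" using lk unfolding bdry_def by auto
    then show "Y \<union> A \<in> \<Gamma>" unfolding link_def by auto
  qed
  have lk2: "\<And>F. F \<in> \<Gamma> \<Longrightarrow> F \<inter> A = {} \<Longrightarrow> F \<union> A \<in> \<Gamma> \<Longrightarrow> F \<subset> B"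
  proof -
    fix F assume "F \<in> \<Gamma>" "F \<inter> A = {}" "F \<union> A \<in> \<Gamma>"
    then have "F \<in> link \<Gamma> A" unfolding link_def by auto
    then show "F \<subset> B" using lk unfolding bdry_def by auto
  qed
  define R where "R = {F. F \<subseteq> A \<union> B \<and> A \<subseteq> F \<and> \<not> B \<subseteq> F}"
  define Ad where "Ad = {F. F \<subseteq> B \<union> A \<and> B \<subseteq> F \<and> \<not> A \<subseteq> F}"
  have J0: "\<And>F. F \<subseteq> A \<union> B \<Longrightarrow> \<not> B \<subseteq> F \<Longrightarrow> F \<in> \<Gamma>"
  proof -
    fix F assume "F \<subseteq> A \<union> B" "\<not> B \<subseteq> F"
    then have "F \<inter> B \<subset> B" "F \<subseteq> (F \<inter> B) \<union> A" by auto
    then show "F \<in> \<Gamma>" using lk1 dc by blast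
  qed
  have RG: "R \<subseteq> \<Gamma>" unfolding R_def using J0 by blast
  have AdG: "Ad \<inter> \<Gamma> = {}" unfolding Ad_def using BG dc by blast
  have G'eq: "\<Gamma>' = (\<Gamma> - R) \<union> Ad"
    unfolding G' join_Pow_bdry[OF dj] join_bdry_Pow[OF dj] R_def Ad_def
    using J0 by blast
  have noR: "\<And>F G. F \<in> \<Gamma> \<Longrightarrow> F \<notin> R \<Longrightarrow> G \<subseteq> F \<Longrightarrow> G \<notin> R"
  proof -
    fix F G assume F0: "F \<in> \<Gamma>" "F \<notin> R" "G \<subseteq> F"
    show "G \<notin> R"
    proof
    assume "G \<in> R"
    with F0 have F: "F \<in> \<Gamma>" "F \<notin> R" "G \<subseteq> F" "G \<in> R" by auto
    then have AF: "A \<subseteq> F" unfolding R_def by auto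
    have "F - A \<in> \<Gamma>" using F dc by blast
    moreover have "(F - A) \<union> A = F" using AF by auto
    ultimately have "F - A \<subset> B" using lk2[of "F - A"] F by auto
    moreover have "\<not> B \<subseteq> F" using F BG dc by blast
    ultimately have "F \<in> R" unfolding R_def using AF by auto
    then show False using F by simp
  qed
  qed
  have finAB: "finite (Pow (A \<union> B))" using fA fB by simp
  have finAd: "finite Ad" unfolding Ad_def by (rule finite_subset[OF _ finAB]) auto
  have finR: "finite R" using RG finG finite_subset by blast
  have good': "good n \<Gamma>'"
    unfolding good_def
  proof (intro conjI)
    show "finite \<Gamma>'" unfolding G'eq using finG finAd by simp
  next
    show "\<forall>F\<in>\<Gamma>'. finite F \<and> card F \<le> n - 1"
    proof
    fix F assume "F \<in> \<Gamma>'"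
    then consider "F \<in> \<Gamma>" | "F \<in> Ad" unfolding G'eq by blast
    then show "finite F \<and> card F \<le> n - 1"
    proof cases
      case 1 then show ?thesis using cG by blast
    next
      case 2
      then have "F \<subset> A \<union> B" unfolding Ad_def by auto
      then have "card F < card (A \<union> B)" using fA fB by (simp add: psubset_card_mono)
      then show ?thesis using cAB \<open>F \<subset> A \<union> B\<close> fA fB finite_subset by fastforce
    qed
    qed
  next
    show "\<forall>F\<in>\<Gamma>'. \<forall>G. G \<subseteq> F \<longrightarrow> G \<in> \<Gamma>'"
    proof (intro ballI allI impI)
    fix F G assume F: "F \<in> \<Gamma>'" and GF: "G \<subseteq> F"
    then consider "F \<in> \<Gamma>" "F \<notin> R" | "F \<in> Ad" unfolding G'eq by blast
    then show "G \<in> \<Gamma>'"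
    proof cases
      case 1 then show ?thesis using noR[OF 1 GF] dc GF unfolding G'eq by blast
    next
      case 2
      then have G1: "G \<subseteq> A \<union> B" "\<not> A \<subseteq> G" using GF unfolding Ad_def by auto
      show ?thesis
      proof (cases "B \<subseteq> G")
        case True then show ?thesis using G1 unfolding G'eq Ad_def by auto
      next
        case False
        then have "G \<in> \<Gamma>" using J0 G1 by blast
        moreover have "G \<notin> R" using G1 unfolding R_def by auto
        ultimately show ?thesis unfolding G'eq by blast
      qed
    qed
    qed
  qed
  have "GG n k \<Gamma>' = GG n k (\<Gamma> - R) + GG n k Ad"
    unfolding G'eq GG_def using finG finAd AdG by (subst sum.union_disjoint) auto
  also have "GG n k (\<Gamma> - R) = GG n k \<Gamma> - GG n k R"
    unfolding GG_def using finG RG by (simp add: sum_diff)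
  also have "GG n k R = 0" unfolding R_def
    by (rule GG_half[OF fA fB dj cn]) (use cB ik kn in auto)
  also have "GG n k Ad = 0" unfolding Ad_def
    by (rule GG_half[OF fB fA]) (use dj cn cA cB ik kn id in auto)
  finally show ?thesis using good' by simp
qed

lemma reach_good:
  assumes r: "(flip_step (n - 2) k)\<^sup>*\<^sup>* (bdry V) \<Gamma>" and fV: "finite V" and cV: "card V = n"
    and k1: "2 \<le> k" and kn: "2 * k + 1 \<le> n"
  shows "good n \<Gamma> \<and> GG n k \<Gamma> = 0"
  using r
proof (induction rule: rtranclp_induct)
  case base
  have b: "bdry V = Pow V - {V}" unfolding bdry_def by auto
  have "good n (bdry V)" unfolding good_def b
  proof (intro conjI)
    show "finite (Pow V - {V})" using fV by simp
  next
    show "\<forall>F\<in>Pow V - {V}. finite F \<and> card F \<le> n - 1"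
    proof
    fix F assume F: "F \<in> Pow V - {V}"
    then have "F \<subset> V" by auto
    then show "finite F \<and> card F \<le> n - 1" using fV cV psubset_card_mono[of V F] finite_subset by fastforce
    qed
  next
    show "\<forall>F\<in>Pow V - {V}. \<forall>G. G \<subseteq> F \<longrightarrow> G \<in> Pow V - {V}" by auto
  qed
  moreover have "GG n k (bdry V) = 0"
  proof -
    have "GG n k (bdry V) = (\<Sum>F\<in>Pow V. wt n k (card F)) - wt n k (card V)"
      unfolding GG_def b using fV by (subst sum_diff1) auto
    also have "wt n k (card V) = 0" using cV kn by (simp add: wt_def)
    also have "(\<Sum>F\<in>Pow V. wt n k (card F)) = (-1)^k * (\<Sum>F\<in>Pow V. (-1::int)^card F * int ((card V - card F) choose (n - k)))"
      unfolding wt_def sum_distrib_left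
      by (rule sum.cong[OF refl]) (simp add: power_add cV)
    also have "\<dots> = 0" using L1[OF fV, of "n - k"] cV k1 kn by simp
    finally show ?thesis by simp
  qed
  ultimately show ?case by simp
next
  case (step \<Gamma>1 \<Gamma>2)
  then obtain i where "i \<le> k - 2" "bistellar_flip (n - 2) i \<Gamma>1 \<Gamma>2" unfolding flip_step_def by blast
  moreover have "i + 2 \<le> k" using \<open>i \<le> k - 2\<close> k1 by simp
  ultimately show ?case using flip_good[of n \<Gamma>1 i \<Gamma>2 k] step kn by auto
qed



lemma neg1_pow_diff:
  assumes "z \<le> n" shows "(-1::int)^(n - z) = (-1)^n * (-1)^z"
proof -
  obtain d where n: "n = z + d" using assms le_Suc_ex by blast
  have "(-1::int)^z * (-1)^z = 1" by (simp add: power_add[symmetric])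
  then have "(-1::int)^d = (-1)^z * (-1)^d * (-1)^z" by (simp add: algebra_simps)
  then show ?thesis using n by (simp add: power_add)
qed

lemma bier_img:
  "bier n \<Delta> = (\<lambda>(B,C). Inl ` B \<union> Inr ` ({1..n} - C)) ` {(B,C). B \<subset> C \<and> C \<subseteq> {1..n} \<and> B \<in> \<Delta> \<and> C \<notin> \<Delta>}"
  unfolding bier_def by auto

lemma lv_simp: "{x. Inl x \<in> Inl ` B \<union> Inr ` Y} = B" by auto
lemma rv_simp: "{x. Inr x \<in> Inl ` B \<union> Inr ` Y} = Y" by auto

lemma card_InlInr:
  fixes B :: "'a set" and Y :: "'b set"
  assumes "finite B" "finite Y" shows "card (Inl ` B \<union> Inr ` Y) = card B + card Y"
proof -
  have "card (Inl ` B \<union> Inr ` Y) = card (Inl ` B :: ('a + 'b) set) + card (Inr ` Y :: ('a + 'b) set)"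
    using assms by (subst card_Un_disjoint) auto
  also have "\<dots> = card B + card Y" by (simp add: card_image)
  finally show ?thesis .
qed

lemma proper_ideal_sub: "proper_ideal n \<Delta> \<Longrightarrow> B \<in> \<Delta> \<Longrightarrow> B \<subseteq> {1..n}"
  unfolding proper_ideal_def by auto

lemma proper_ideal_fin: "proper_ideal n \<Delta> \<Longrightarrow> finite \<Delta>"
  unfolding proper_ideal_def by (meson finite_Pow_iff finite_atLeastAtMost finite_subset)

lemma proper_ideal_dc: "proper_ideal n \<Delta> \<Longrightarrow> B \<in> \<Delta> \<Longrightarrow> A \<subseteq> B \<Longrightarrow> A \<in> \<Delta>"
  unfolding proper_ideal_def by auto

lemma bier_fin_card:
  assumes pi: "proper_ideal n \<Delta>"
  shows "finite (bier n \<Delta>) \<and> (\<forall>F\<in>bier n \<Delta>. finite F \<and> card F \<le> n - 1)"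
proof
  have "bier n \<Delta> \<subseteq> Pow (Inl ` {1..n} \<union> Inr ` {1..n})"
    unfolding bier_def using proper_ideal_sub[OF pi] by blast
  then show "finite (bier n \<Delta>)" by (rule finite_subset) simp
next
  show "\<forall>F\<in>bier n \<Delta>. finite F \<and> card F \<le> n - 1"
  proof
    fix F assume "F \<in> bier n \<Delta>"
    then obtain B C where F: "F = Inl ` B \<union> Inr ` ({1..n} - C)" and BC: "B \<subset> C" "C \<subseteq> {1..n}"
      unfolding bier_def by auto
    have fC: "finite C" using BC finite_subset by blast
    have fB: "finite B" using BC fC finite_subset by blast
    have "card B < card C" using BC fC psubset_card_mono by blast
    moreover have "card ({1..n} - C) = n - card C" using BC fC by (simp add: card_Diff_subset)
    moreover have "card C \<le> n" using BC card_mono[of "{1..n}" C] by simp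
    ultimately show "finite F \<and> card F \<le> n - 1" unfolding F using fB card_InlInr[OF fB, of "{1..n} - C"] by simp
  qed
qed



lemma sum_ind_card:
  assumes "finite \<Delta>"
  shows "(\<Sum>B\<in>\<Delta>. (if card B = j then 1 else 0::int)) = int (fnum \<Delta> j)"
proof -
  have "(\<Sum>B\<in>\<Delta>. (if card B = j then 1 else 0::int)) = (\<Sum>B\<in>{B\<in>\<Delta>. card B = j}. 1)"
    using assms by (simp add: sum.inter_filter[symmetric])
  then show ?thesis unfolding fnum_def by simp
qed

lemma GG_bier:
  assumes pi: "proper_ideal n \<Delta>" and k1: "1 \<le> k" and kn: "k < n"
  shows "GG n k (bier n \<Delta>) = int (fnum \<Delta> k) - int (fnum \<Delta> (n - k))"
proof -
  define P where "P = {(B,C). B \<subset> C \<and> C \<subseteq> {1..n} \<and> B \<in> \<Delta> \<and> C \<notin> \<Delta>}"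
  define \<phi> where "\<phi> = (\<lambda>(B::nat set,C::nat set). (Inl ` B \<union> Inr ` ({1..n} - C) :: (nat+nat) set))"
  have finD: "finite \<Delta>" using proper_ideal_fin[OF pi] .
  have sub: "\<And>B. B \<in> \<Delta> \<Longrightarrow> B \<subseteq> {1..n}" using proper_ideal_sub[OF pi] .
  have inj: "inj_on \<phi> P"
  proof (rule inj_onI)
    fix p q assume p: "p \<in> P" and q: "q \<in> P" and e: "\<phi> p = \<phi> q"
    obtain B C where pB: "p = (B,C)" by (cases p)
    obtain B' C' where qB: "q = (B',C')" by (cases q)
    have "{x. Inl x \<in> \<phi> p} = {x. Inl x \<in> \<phi> q}" "{x. Inr x \<in> \<phi> p} = {x. Inr x \<in> \<phi> q}" using e by auto
    then have "B = B'" "{1..n} - C = {1..n} - C'" unfolding pB qB \<phi>_def by (simp_all only: prod.case lv_simp rv_simp)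
    moreover have "C \<subseteq> {1..n}" "C' \<subseteq> {1..n}" using p q pB qB unfolding P_def by auto
    ultimately show "p = q" using pB qB by blast
  qed
  have bi: "bier n \<Delta> = \<phi> ` P" unfolding bier_img P_def \<phi>_def by (rule refl)
  have "GG n k (bier n \<Delta>) = (\<Sum>p\<in>P. wt n k (card (\<phi> p)))"
    unfolding GG_def bi by (simp add: sum.reindex[OF inj])
  also have "\<dots> = (\<Sum>(B,C)\<in>P. wt n k (card B + (n - card C)))"
  proof (rule sum.cong[OF refl])
    fix p assume "p \<in> P"
    then obtain B C where p: "p = (B,C)" and BC: "B \<subset> C" "C \<subseteq> {1..n}" unfolding P_def by auto
    have fC: "finite C" using BC finite_subset by blast
    have fB: "finite B" using BC fC finite_subset by blast
    have "card ({1..n} - C) = n - card C" using BC fC by (simp add: card_Diff_subset)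
    then show "wt n k (card (\<phi> p)) = (case p of (B, C) \<Rightarrow> wt n k (card B + (n - card C)))"
      unfolding p \<phi>_def using card_InlInr[OF fB, of "{1..n} - C"] by simp
  qed
  also have "P = Sigma \<Delta> (\<lambda>B. {C. B \<subseteq> C \<and> C \<subseteq> {1..n}} - {C \<in> \<Delta>. B \<subseteq> C})"
    unfolding P_def by auto
  also have "(\<Sum>(B,C)\<in>Sigma \<Delta> (\<lambda>B. {C. B \<subseteq> C \<and> C \<subseteq> {1..n}} - {C \<in> \<Delta>. B \<subseteq> C}). wt n k (card B + (n - card C)))
      = (\<Sum>B\<in>\<Delta>. \<Sum>C\<in>{C. B \<subseteq> C \<and> C \<subseteq> {1..n}} - {C \<in> \<Delta>. B \<subseteq> C}. wt n k (card B + (n - card C)))"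
    by (rule sum.Sigma[symmetric]) (use finD in auto)
  also have "\<dots> = (\<Sum>B\<in>\<Delta>. (\<Sum>C\<in>{C. B \<subseteq> C \<and> C \<subseteq> {1..n}}. wt n k (card B + (n - card C)))
                      - (\<Sum>C\<in>{C \<in> \<Delta>. B \<subseteq> C}. wt n k (card B + (n - card C))))"
  proof (rule sum.cong[OF refl])
    fix B assume "B \<in> \<Delta>"
    have "finite {C. B \<subseteq> C \<and> C \<subseteq> {1..n}}" by (rule finite_subset[of _ "Pow {1..n}"]) auto
    moreover have "{C \<in> \<Delta>. B \<subseteq> C} \<subseteq> {C. B \<subseteq> C \<and> C \<subseteq> {1..n}}" using sub by auto
    ultimately show "(\<Sum>C\<in>{C. B \<subseteq> C \<and> C \<subseteq> {1..n}} - {C \<in> \<Delta>. B \<subseteq> C}. wt n k (card B + (n - card C)))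
       = (\<Sum>C\<in>{C. B \<subseteq> C \<and> C \<subseteq> {1..n}}. wt n k (card B + (n - card C)))
                      - (\<Sum>C\<in>{C \<in> \<Delta>. B \<subseteq> C}. wt n k (card B + (n - card C)))"
      by (simp add: sum_diff)
  qed
  also have "\<dots> = (\<Sum>B\<in>\<Delta>. \<Sum>C\<in>{C. B \<subseteq> C \<and> C \<subseteq> {1..n}}. wt n k (card B + (n - card C)))
                - (\<Sum>B\<in>\<Delta>. \<Sum>C\<in>{C \<in> \<Delta>. B \<subseteq> C}. wt n k (card B + (n - card C)))"
    by (rule sum_subtractf)
  also have "(\<Sum>B\<in>\<Delta>. \<Sum>C\<in>{C. B \<subseteq> C \<and> C \<subseteq> {1..n}}. wt n k (card B + (n - card C)))
      = (\<Sum>B\<in>\<Delta>. (if card B = k then 1 else 0))"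
  proof (rule sum.cong[OF refl])
    fix B assume B: "B \<in> \<Delta>"
    have Bs: "B \<subseteq> {1..n}" using sub B .
    have fB: "finite B" using Bs finite_subset by blast
    have cBn: "card B \<le> n" using Bs card_mono[of "{1..n}" B] by simp
    define Q where "Q = {1..n} - B"
    have fQ: "finite Q" unfolding Q_def by simp
    have cQ: "card Q = n - card B" unfolding Q_def using Bs fB by (simp add: card_Diff_subset)
    have U: "{C. B \<subseteq> C \<and> C \<subseteq> {1..n}} = (\<lambda>Z. B \<union> Z) ` Pow Q"
    proof (intro set_eqI iffI)
      fix C assume "C \<in> {C. B \<subseteq> C \<and> C \<subseteq> {1..n}}"
      then have "C = B \<union> (C - B)" "C - B \<in> Pow Q" unfolding Q_def by auto
      then show "C \<in> (\<lambda>Z. B \<union> Z) ` Pow Q" by blast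
    next
      fix C assume "C \<in> (\<lambda>Z. B \<union> Z) ` Pow Q"
      then show "C \<in> {C. B \<subseteq> C \<and> C \<subseteq> {1..n}}" using Bs unfolding Q_def by auto
    qed
    have injZ: "inj_on (\<lambda>Z. B \<union> Z) (Pow Q)"
    proof (rule inj_onI)
      fix Y Z assume "Y \<in> Pow Q" "Z \<in> Pow Q" "B \<union> Y = B \<union> Z"
      then have "(B \<union> Y) - B = (B \<union> Z) - B" by simp
      then show "Y = Z" using \<open>Y \<in> Pow Q\<close> \<open>Z \<in> Pow Q\<close> unfolding Q_def by auto
    qed
    have "(\<Sum>C\<in>{C. B \<subseteq> C \<and> C \<subseteq> {1..n}}. wt n k (card B + (n - card C)))
        = (\<Sum>Z\<in>Pow Q. wt n k (card B + (n - card (B \<union> Z))))"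
      unfolding U by (subst sum.reindex[OF injZ]) simp
    also have "\<dots> = (\<Sum>Z\<in>Pow Q. (-1)^(k+n) * ((-1::int)^card Z * int (card Z choose (n - k))))"
    proof (rule sum.cong[OF refl])
      fix Z assume Z: "Z \<in> Pow Q"
      have fZ: "finite Z" using Z fQ finite_subset by blast
      have cU: "card (B \<union> Z) = card B + card Z" using Z fB fZ unfolding Q_def by (subst card_Un_disjoint) auto
      have "card Z \<le> card Q" using Z fQ card_mono by blast
      then have zn: "card Z \<le> n" and e: "card B + (n - (card B + card Z)) = n - card Z" using cQ cBn by auto
      show "wt n k (card B + (n - card (B \<union> Z))) = (-1)^(k+n) * ((-1::int)^card Z * int (card Z choose (n - k)))"
        unfolding cU e wt_def using zn
        by (simp add: power_add neg1_pow_diff algebra_simps)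
    qed
    also have "\<dots> = (-1)^(k+n) * (\<Sum>Z\<in>Pow Q. (-1::int)^card Z * int (card Z choose (n - k)))"
      by (simp add: sum_distrib_left)
    also have "\<dots> = (-1)^(k+n) * (if card Q = n - k then (-1)^(n-k) else 0)"
      using L2[OF fQ] by simp
    also have "\<dots> = (if card B = k then 1 else 0)"
    proof (cases "card B = k")
      case True
      then have "(-1::int)^(k+n) * (-1)^(n-k) = (-1)^(k + n + (n - k))" by (simp add: power_add)
      also have "k + n + (n - k) = 2 * n" using kn by simp
      finally show ?thesis using True cQ by simp
    next
      case False
      then show ?thesis using cQ cBn kn by auto
    qed
    finally show "(\<Sum>C\<in>{C. B \<subseteq> C \<and> C \<subseteq> {1..n}}. wt n k (card B + (n - card C))) = (if card B = k then 1 else 0)" .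
  qed
  also have "(\<Sum>B\<in>\<Delta>. \<Sum>C\<in>{C \<in> \<Delta>. B \<subseteq> C}. wt n k (card B + (n - card C)))
      = (\<Sum>C\<in>\<Delta>. \<Sum>B\<in>{B \<in> \<Delta>. B \<subseteq> C}. wt n k (card B + (n - card C)))"
    by (rule sum.swap_restrict) (use finD in auto)
  also have "\<dots> = (\<Sum>C\<in>\<Delta>. (if card C = n - k then 1 else 0))"
  proof (rule sum.cong[OF refl])
    fix C assume C: "C \<in> \<Delta>"
    have Cs: "C \<subseteq> {1..n}" using sub C .
    have fC: "finite C" using Cs finite_subset by blast
    have cCn: "card C \<le> n" using Cs card_mono[of "{1..n}" C] by simp
    have PC: "{B \<in> \<Delta>. B \<subseteq> C} = Pow C" using C proper_ideal_dc[OF pi] by auto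
    have "(\<Sum>B\<in>{B \<in> \<Delta>. B \<subseteq> C}. wt n k (card B + (n - card C)))
       = (\<Sum>B\<in>Pow C. (-1)^(k + (n - card C)) * ((-1::int)^card B * int ((card C - card B) choose (n - k))))"
      unfolding PC
    proof (rule sum.cong[OF refl])
      fix B assume B: "B \<in> Pow C"
      have "card B \<le> card C" using B fC card_mono by blast
      then have "n - (card B + (n - card C)) = card C - card B" using cCn by simp
      then show "wt n k (card B + (n - card C)) = (-1)^(k + (n - card C)) * ((-1::int)^card B * int ((card C - card B) choose (n - k)))"
        unfolding wt_def by (simp add: power_add algebra_simps)
    qed
    also have "\<dots> = (-1)^(k + (n - card C)) * (\<Sum>B\<in>Pow C. (-1::int)^card B * int ((card C - card B) choose (n - k)))"
      by (simp add: sum_distrib_left)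
    also have "\<dots> = (if card C = n - k then 1 else 0)"
    proof (cases "card C = n - k")
      case True
      then have "k + (n - card C) = 2 * k" using kn by simp
      then show ?thesis using L1[OF fC, of "n - k"] True by (simp add: power_mult)
    next
      case False
      then show ?thesis using L1[OF fC, of "n - k"] by simp
    qed
    finally show "(\<Sum>B\<in>{B \<in> \<Delta>. B \<subseteq> C}. wt n k (card B + (n - card C))) = (if card C = n - k then 1 else 0)" .
  qed
  finally show ?thesis using sum_ind_card[OF finD] by simp
qed



lemma ext_set:
  assumes "X \<subseteq> {1..n}" "card X \<le> j" "j \<le> n"
  obtains T where "X \<subseteq> T" "T \<subseteq> {1..(n::nat)}" "card T = j"
proof -
  have fX: "finite X" using assms(1) by (rule finite_subset) simp
  have cX: "card ({1..n} - X) = n - card X" using assms(1) fX by (simp add: card_Diff_subset)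
  have "j - card X \<le> card ({1..n} - X)" using cX assms by simp
  then obtain W where W: "W \<subseteq> {1..n} - X" "card W = j - card X" "finite W"
    by (rule obtain_subset_with_card_n)
  have "card (X \<union> W) = card X + card W" using W fX by (subst card_Un_disjoint) auto
  then show ?thesis using that[of "X \<union> W"] W assms by auto
qed

lemma card_level: "card {T. T \<subseteq> {1..n} \<and> card T = j} = n choose j"
  using n_subsets[of "{1..n}" j] by simp

lemma shadow:
  assumes pi: "proper_ideal n \<Delta>" and k1: "1 \<le> k" and kn: "2 * k + 1 \<le> n"
  shows "(fnum \<Delta> k = fnum \<Delta> (n - k)) \<longleftrightarrow> (fnum \<Delta> k = 0 \<or> fnum \<Delta> (n - k) = n choose k)"
proof -
  have finD: "finite \<Delta>" using proper_ideal_fin[OF pi] .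
  have sub: "\<And>B. B \<in> \<Delta> \<Longrightarrow> B \<subseteq> {1..n}" using proper_ideal_sub[OF pi] .
  have dc: "\<And>A B. B \<in> \<Delta> \<Longrightarrow> A \<subseteq> B \<Longrightarrow> A \<in> \<Delta>" using proper_ideal_dc[OF pi] by blast
  define K where "K = {X \<in> \<Delta>. card X = k}"
  define F where "F = {T \<in> \<Delta>. card T = n - k}"
  define Lk where "Lk = {T. T \<subseteq> {1..n} \<and> card T = k}"
  define Lnk where "Lnk = {T. T \<subseteq> {1..n} \<and> card T = n - k}"
  have fK: "fnum \<Delta> k = card K" unfolding fnum_def K_def by simp
  have fF: "fnum \<Delta> (n - k) = card F" unfolding fnum_def F_def by simp
  have cLk: "card Lk = n choose k" unfolding Lk_def by (rule card_level)
  have cLnk: "card Lnk = n choose k" unfolding Lnk_def using card_level[of n "n - k"] kn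
    by (simp add: binomial_symmetric[of k n])
  have finLk: "finite Lk" unfolding Lk_def by (rule finite_subset[of _ "Pow {1..n}"]) auto
  have finLnk: "finite Lnk" unfolding Lnk_def by (rule finite_subset[of _ "Pow {1..n}"]) auto
  have KL: "K \<subseteq> Lk" unfolding K_def Lk_def using sub by auto
  have FL: "F \<subseteq> Lnk" unfolding F_def Lnk_def using sub by auto
  have down: "\<And>T. T \<in> F \<Longrightarrow> \<exists>X. X \<subseteq> T \<and> X \<in> K"
  proof -
    fix T assume T: "T \<in> F"
    have "k \<le> card T" using T kn unfolding F_def by auto
    then obtain X where "X \<subseteq> T" "card X = k" "finite X" by (rule obtain_subset_with_card_n)
    then show "\<exists>X. X \<subseteq> T \<and> X \<in> K" using T dc[of T X] unfolding F_def K_def by auto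
  qed
  show ?thesis
  proof
    assume eq: "fnum \<Delta> k = fnum \<Delta> (n - k)"
    show "fnum \<Delta> k = 0 \<or> fnum \<Delta> (n - k) = n choose k"
    proof (cases "K = {}")
      case True then show ?thesis using fK by simp
    next
      case False
      then obtain X0 where X0: "X0 \<in> K" by blast
      define Pr where "Pr = Sigma F (\<lambda>T. {X. X \<subseteq> T \<and> card X = k})"
      define Q0 where "Q0 = Sigma K (\<lambda>X. {T. X \<subseteq> T \<and> T \<subseteq> {1..n} \<and> card T = n - k})"
      have finF: "finite F" using FL finLnk by (rule finite_subset)
      have finK: "finite K" using KL finLk by (rule finite_subset)
      have cPr: "card Pr = card F * ((n - k) choose k)"
      proof -
        have "\<forall>T\<in>F. finite {X. X \<subseteq> T \<and> card X = k}"
        proof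
          fix T assume T: "T \<in> F"
          have "T \<subseteq> {1..n}" using T sub unfolding F_def by auto
          then have fT: "finite T" by (rule finite_subset) simp
          show "finite {X. X \<subseteq> T \<and> card X = k}" by (rule finite_subset[of _ "Pow T"]) (auto simp: fT)
        qed
        moreover have "\<forall>T\<in>F. card {X. X \<subseteq> T \<and> card X = k} = (n - k) choose k"
        proof
          fix T assume T: "T \<in> F"
          have "T \<subseteq> {1..n}" using T sub unfolding F_def by auto
          then have "finite T" by (rule finite_subset) simp
          then show "card {X. X \<subseteq> T \<and> card X = k} = (n - k) choose k" using n_subsets[of T k] T unfolding F_def by simp
        qed
        ultimately show ?thesis unfolding Pr_def using finF by simp
      qed
      have cQ0: "card Q0 = card K * ((n - k) choose k)"
      proof -
        have inner: "\<forall>X\<in>K. finite {T. X \<subseteq> T \<and> T \<subseteq> {1..n} \<and> card T = n - k} \<and>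
                  card {T. X \<subseteq> T \<and> T \<subseteq> {1..n} \<and> card T = n - k} = (n - k) choose k"
        proof
          fix X assume X: "X \<in> K"
          have Xs: "X \<subseteq> {1..n}" and cX: "card X = k" using X sub unfolding K_def by auto
          have fX: "finite X" using Xs by (rule finite_subset) simp
          define R where "R = {1..n} - X"
          have fR: "finite R" unfolding R_def by simp
          have cR: "card R = n - k" unfolding R_def using Xs fX cX by (simp add: card_Diff_subset)
          have img: "{T. X \<subseteq> T \<and> T \<subseteq> {1..n} \<and> card T = n - k} = (\<lambda>W. X \<union> W) ` {W. W \<subseteq> R \<and> card W = n - k - k}"
          proof (intro set_eqI iffI)
            fix T assume T: "T \<in> {T. X \<subseteq> T \<and> T \<subseteq> {1..n} \<and> card T = n - k}"
            have "T \<subseteq> {1..n}" using T by simp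
            then have fT: "finite T" by (rule finite_subset) simp
            have "card (T - X) = n - k - k" using T fT fX cX by (simp add: card_Diff_subset)
            moreover have "T = X \<union> (T - X)" using T by auto
            moreover have "T - X \<subseteq> R" using T unfolding R_def by auto
            ultimately show "T \<in> (\<lambda>W. X \<union> W) ` {W. W \<subseteq> R \<and> card W = n - k - k}"
              by (intro rev_image_eqI[of "T - X"]) auto
          next
            fix T assume "T \<in> (\<lambda>W. X \<union> W) ` {W. W \<subseteq> R \<and> card W = n - k - k}"
            then obtain W where W: "T = X \<union> W" "W \<subseteq> R" "card W = n - k - k" by auto
            have fW: "finite W" using W(2) fR by (rule finite_subset)
            have "card T = card X + card W" unfolding W(1) using W fW fX unfolding R_def by (subst card_Un_disjoint) auto
            then show "T \<in> {T. X \<subseteq> T \<and> T \<subseteq> {1..n} \<and> card T = n - k}" using W cX Xs kn unfolding R_def by auto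
          qed
          have inj: "inj_on (\<lambda>W. X \<union> W) {W. W \<subseteq> R \<and> card W = n - k - k}"
          proof (rule inj_onI)
            fix V W assume "V \<in> {W. W \<subseteq> R \<and> card W = n - k - k}" "W \<in> {W. W \<subseteq> R \<and> card W = n - k - k}" "X \<union> V = X \<union> W"
            then have "V = (X \<union> V) - X" "W = (X \<union> W) - X" unfolding R_def by auto
            then show "V = W" using \<open>X \<union> V = X \<union> W\<close> by simp
          qed
          have "card {T. X \<subseteq> T \<and> T \<subseteq> {1..n} \<and> card T = n - k} = (n - k) choose (n - k - k)"
            unfolding img card_image[OF inj] using n_subsets[OF fR, of "n - k - k"] cR by simp
          also have "\<dots> = (n - k) choose k" using binomial_symmetric[of k "n - k"] kn by simp
          moreover have "finite {T. X \<subseteq> T \<and> T \<subseteq> {1..n} \<and> card T = n - k}"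
            by (rule finite_subset[of _ "Pow {1..n}"]) auto
          ultimately show "finite {T. X \<subseteq> T \<and> T \<subseteq> {1..n} \<and> card T = n - k} \<and>
                  card {T. X \<subseteq> T \<and> T \<subseteq> {1..n} \<and> card T = n - k} = (n - k) choose k"
            by simp
        qed
        then show ?thesis unfolding Q0_def using finK by simp
      qed
      define Q where "Q = prod.swap ` Q0"
      have cQ: "card Q = card Q0" unfolding Q_def by (simp add: card_image)
      have "Q0 \<subseteq> Pow {1..n} \<times> Pow {1..n}" unfolding Q0_def K_def using sub by auto
      then have "finite Q0" by (rule finite_subset) simp
      then have finQ: "finite Q" unfolding Q_def by simp
      have PrQ: "Pr \<subseteq> Q"
      proof
        fix p assume "p \<in> Pr"
        then obtain T X where p: "p = (T,X)" "T \<in> F" "X \<subseteq> T" "card X = k" unfolding Pr_def by auto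
        then have "(X,T) \<in> Q0" unfolding Q0_def K_def F_def using dc[of T X] sub[of T] by auto
        then have "prod.swap (X,T) \<in> Q" unfolding Q_def by (rule imageI)
        then show "p \<in> Q" unfolding p by simp
      qed
      have pos: "0 < (n - k) choose k" using kn by simp
      have "card Pr = card Q" using cPr cQ cQ0 eq fK fF by simp
      then have PrQe: "Pr = Q" using card_subset_eq[OF finQ PrQ] by simp
      have clos: "\<And>X T. X \<in> K \<Longrightarrow> X \<subseteq> T \<Longrightarrow> T \<subseteq> {1..n} \<Longrightarrow> card T = n - k \<Longrightarrow> T \<in> \<Delta>"
      proof -
        fix X T assume "X \<in> K" "X \<subseteq> T" "T \<subseteq> {1..n}" "card T = n - k"
        then have "(X,T) \<in> Q0" unfolding Q0_def by simp
        then have "prod.swap (X,T) \<in> Q" unfolding Q_def by (rule imageI)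
        then have "(T,X) \<in> Q" by simp
        then have "(T,X) \<in> Pr" using PrQe by simp
        then show "T \<in> \<Delta>" unfolding Pr_def F_def by auto
      qed
      have X0s: "X0 \<subseteq> {1..n}" "card X0 = k" using X0 sub unfolding K_def by auto
      have fX0: "finite X0" using X0s(1) by (rule finite_subset) simp
      have allK: "\<And>X. X \<subseteq> {1..n} \<Longrightarrow> card X = k \<Longrightarrow> X \<in> \<Delta>"
      proof -
        fix X :: "nat set"
        show "X \<subseteq> {1..n} \<Longrightarrow> card X = k \<Longrightarrow> X \<in> \<Delta>"
        proof (induction "card (X - X0)" arbitrary: X rule: less_induct)
          case less
          have fX: "finite X" using less.prems(1) by (rule finite_subset) simp
          show ?case
          proof (cases "X - X0 = {}")
            case True
            then have "X \<subseteq> X0" by auto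
            then have "X = X0" using card_subset_eq[OF fX0] less.prems X0s by simp
            then show ?thesis using X0 unfolding K_def by simp
          next
            case False
            then obtain y where y: "y \<in> X" "y \<notin> X0" by blast
            have "\<not> X0 \<subseteq> X"
            proof
              assume "X0 \<subseteq> X"
              then have "X0 = X" using card_subset_eq[OF fX] less.prems X0s by simp
              then show False using y by simp
            qed
            then obtain x where x: "x \<in> X0" "x \<notin> X" by blast
            define X1 where "X1 = insert x (X - {y})"
            have fX1: "finite X1" unfolding X1_def using fX by simp
            have cX1: "card X1 = k" unfolding X1_def using fX x y less.prems k1 by (simp add: card_Diff_singleton)
            have X1s: "X1 \<subseteq> {1..n}" unfolding X1_def using x X0s less.prems by auto
            have "X1 - X0 = (X - X0) - {y}" unfolding X1_def using x by auto
            moreover have "card ((X - X0) - {y}) < card (X - X0)" using y fX by (intro card_Diff1_less) auto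
            ultimately have "card (X1 - X0) < card (X - X0)" by simp
            then have X1D: "X1 \<in> \<Delta>" using less.hyps X1s cX1 by blast
            have "X1 \<union> X = insert x X" unfolding X1_def using y by auto
            then have cU: "card (X1 \<union> X) = k + 1" using fX x less.prems by simp
            have h1: "X1 \<union> X \<subseteq> {1..n}" using X1s less.prems by auto
            have h2: "card (X1 \<union> X) \<le> n - k" using cU kn by simp
            obtain T where T: "X1 \<union> X \<subseteq> T" "T \<subseteq> {1..n}" "card T = n - k"
              by (rule ext_set[OF h1 h2 diff_le_self])
            have "T \<in> \<Delta>" using clos[of X1 T] X1D cX1 T unfolding K_def by auto
            then show ?thesis using dc[of T X] T by auto
          qed
        qed
      qed
      have "Lnk \<subseteq> F"
      proof
        fix T assume T: "T \<in> Lnk"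
        have "T \<subseteq> {1..n}" using T unfolding Lnk_def by simp
        then have fT: "finite T" by (rule finite_subset) simp
        have "k \<le> card T" using T kn unfolding Lnk_def by auto
        then obtain X where X: "X \<subseteq> T" "card X = k" "finite X" by (rule obtain_subset_with_card_n)
        then have "X \<in> K" using allK[of X] T unfolding K_def Lnk_def by auto
        then have "T \<in> \<Delta>" using clos[of X T] X T unfolding Lnk_def by auto
        then show "T \<in> F" using T unfolding F_def Lnk_def by auto
      qed
      then have "F = Lnk" using FL by auto
      then show ?thesis using fF cLnk by simp
    qed
  next
    assume "fnum \<Delta> k = 0 \<or> fnum \<Delta> (n - k) = n choose k"
    then show "fnum \<Delta> k = fnum \<Delta> (n - k)"
    proof
      assume "fnum \<Delta> k = 0"
      then have "K = {}" using fK finLk KL finite_subset by (metis card_0_eq)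
      then have "F = {}" using down by blast
      then show ?thesis using fK fF \<open>K = {}\<close> by simp
    next
      assume "fnum \<Delta> (n - k) = n choose k"
      then have "F = Lnk" using card_subset_eq[OF finLnk FL] fF cLnk by simp
      have "Lk \<subseteq> K"
      proof
        fix X assume X: "X \<in> Lk"
        have h1: "X \<subseteq> {1..n}" and h2: "card X \<le> n - k" using X kn unfolding Lk_def by auto
        obtain T where "X \<subseteq> T" "T \<subseteq> {1..n}" "card T = n - k"
          by (rule ext_set[OF h1 h2 diff_le_self])
        then have "T \<in> \<Delta>" using \<open>F = Lnk\<close> unfolding F_def Lnk_def by auto
        then show "X \<in> K" using dc[of T X] \<open>X \<subseteq> T\<close> X unfolding K_def Lk_def by auto
      qed
      then have "K = Lk" using KL by auto
      then show ?thesis using fK fF cLk cLnk \<open>F = Lnk\<close> by simp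
    qed
  qed
qed



definition lv :: "('a + 'b) set \<Rightarrow> 'a set" where "lv F = {x. Inl x \<in> F}"
definition rv :: "('a + 'b) set \<Rightarrow> 'b set" where "rv F = {x. Inr x \<in> F}"

lemma F_decomp: "F = Inl ` lv F \<union> Inr ` rv F"
proof (rule set_eqI)
  fix x show "x \<in> F \<longleftrightarrow> x \<in> Inl ` lv F \<union> Inr ` rv F"
    by (cases x) (auto simp: lv_def rv_def)
qed

lemma lr_eq: "F = G \<longleftrightarrow> lv F = lv G \<and> rv F = rv G"
  by (metis F_decomp)

lemma lr_sub: "F \<subseteq> G \<longleftrightarrow> lv F \<subseteq> lv G \<and> rv F \<subseteq> rv G"
proof
  assume "F \<subseteq> G" then show "lv F \<subseteq> lv G \<and> rv F \<subseteq> rv G" unfolding lv_def rv_def by auto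
next
  assume "lv F \<subseteq> lv G \<and> rv F \<subseteq> rv G"
  then show "F \<subseteq> G" by (subst F_decomp, subst (2) F_decomp) blast
qed

lemma lv_Un[simp]: "lv (F \<union> G) = lv F \<union> lv G" unfolding lv_def by auto
lemma rv_Un[simp]: "rv (F \<union> G) = rv F \<union> rv G" unfolding rv_def by auto
lemma lv_Int[simp]: "lv (F \<inter> G) = lv F \<inter> lv G" unfolding lv_def by auto
lemma rv_Int[simp]: "rv (F \<inter> G) = rv F \<inter> rv G" unfolding rv_def by auto
lemma lv_Inl[simp]: "lv (Inl ` X) = X" unfolding lv_def by auto
lemma rv_Inl[simp]: "rv (Inl ` X) = {}" unfolding rv_def by auto
lemma lv_Inr[simp]: "lv (Inr ` X) = {}" unfolding lv_def by auto
lemma rv_Inr[simp]: "rv (Inr ` X) = X" unfolding rv_def by auto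
lemma lv_empty[simp]: "lv {} = {}" unfolding lv_def by auto
lemma rv_empty[simp]: "rv {} = {}" unfolding rv_def by auto
lemma lr_empty: "F = {} \<longleftrightarrow> lv F = {} \<and> rv F = {}" by (subst lr_eq) simp

lemma bier_mem:
  assumes sub: "\<forall>B\<in>\<Delta>. B \<subseteq> {1..n}"
  shows "F \<in> bier n \<Delta> \<longleftrightarrow> (lv F \<in> \<Delta> \<and> rv F \<subseteq> {1..n} \<and> lv F \<inter> rv F = {} \<and> lv F \<union> rv F \<noteq> {1..n}
            \<and> {1..n} - rv F \<notin> \<Delta>)"
proof
  assume "F \<in> bier n \<Delta>"
  then obtain B C where F: "F = Inl ` B \<union> Inr ` ({1..n} - C)" and BC: "B \<subset> C" "C \<subseteq> {1..n}" "B \<in> \<Delta>" "C \<notin> \<Delta>"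
    unfolding bier_def by auto
  have l: "lv F = B" and r: "rv F = {1..n} - C" unfolding F by simp_all
  have "{1..n} - ({1..n} - C) = C" using BC by auto
  moreover obtain c where "c \<in> C" "c \<notin> B" using BC by auto
  ultimately show "lv F \<in> \<Delta> \<and> rv F \<subseteq> {1..n} \<and> lv F \<inter> rv F = {} \<and> lv F \<union> rv F \<noteq> {1..n} \<and> {1..n} - rv F \<notin> \<Delta>"
    unfolding l r using BC by auto
next
  assume h: "lv F \<in> \<Delta> \<and> rv F \<subseteq> {1..n} \<and> lv F \<inter> rv F = {} \<and> lv F \<union> rv F \<noteq> {1..n} \<and> {1..n} - rv F \<notin> \<Delta>"
  define B where "B = lv F"
  define C where "C = {1..n} - rv F"
  have "{1..n} - C = rv F" unfolding C_def using h by auto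
  then have F: "F = Inl ` B \<union> Inr ` ({1..n} - C)" unfolding B_def using F_decomp by metis
  have Bs: "B \<subseteq> {1..n}" using sub h unfolding B_def by auto
  have "B \<subset> C" unfolding B_def C_def using h Bs unfolding B_def by auto
  moreover have "C \<subseteq> {1..n}" "B \<in> \<Delta>" "C \<notin> \<Delta>" unfolding B_def C_def using h by auto
  ultimately show "F \<in> bier n \<Delta>" unfolding bier_def F by blast
qed



lemma ins_sets:
  fixes X Y S U :: "nat set"
  assumes dc: "\<And>A B. B \<in> \<Delta> \<Longrightarrow> A \<subseteq> B \<Longrightarrow> A \<in> \<Delta>" and sub: "\<And>B. B \<in> \<Delta> \<Longrightarrow> B \<subseteq> U"
    and SU: "S \<subseteq> U" and SD: "S \<notin> \<Delta>" and sm: "\<And>T. T \<subset> S \<Longrightarrow> T \<in> \<Delta>"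
  shows "(X \<in> insert S \<Delta> \<and> Y \<subseteq> U \<and> X \<inter> Y = {} \<and> X \<union> Y \<noteq> U \<and> U - Y \<notin> insert S \<Delta>) \<longleftrightarrow>
    ((X \<in> \<Delta> \<and> Y \<subseteq> U \<and> X \<inter> Y = {} \<and> X \<union> Y \<noteq> U \<and> U - Y \<notin> \<Delta> \<and> \<not> (X \<subseteq> S \<and> Y \<subseteq> U - S \<and> \<not> S \<subseteq> X))
     \<or> (X \<subseteq> S \<and> Y \<subseteq> U - S \<and> \<not> (U - S \<subseteq> Y)))" (is "?L \<longleftrightarrow> ?R")
proof
  assume L: ?L
  have YUS: "Y = U - S \<Longrightarrow> False"
  proof -
    assume "Y = U - S"
    then have "U - Y = S" using SU by auto
    then show False using L by auto
  qed
  show ?R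
  proof (cases "X = S")
    case True
    then have "Y \<subseteq> U - S" using L by auto
    moreover have "\<not> (U - S \<subseteq> Y)" using YUS \<open>Y \<subseteq> U - S\<close> by auto
    ultimately show ?thesis using True by auto
  next
    case False
    then have XD: "X \<in> \<Delta>" using L by auto
    show ?thesis
    proof (cases "X \<subseteq> S \<and> Y \<subseteq> U - S \<and> \<not> S \<subseteq> X")
      case True
      then have "\<not> (U - S \<subseteq> Y)" using YUS by auto
      then show ?thesis using True by auto
    next
      case False
      then show ?thesis using L XD by auto
    qed
  qed
next
  assume R: ?R
  then show ?L
  proof
    assume l: "X \<in> \<Delta> \<and> Y \<subseteq> U \<and> X \<inter> Y = {} \<and> X \<union> Y \<noteq> U \<and> U - Y \<notin> \<Delta> \<and> \<not> (X \<subseteq> S \<and> Y \<subseteq> U - S \<and> \<not> S \<subseteq> X)"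
    have "U - Y \<noteq> S"
    proof
      assume e: "U - Y = S"
      then have Y: "Y = U - S" using l by auto
      have "X \<subseteq> U" using l sub by auto
      then have "X \<subseteq> S" using l Y by auto
      moreover have "\<not> S \<subseteq> X" using \<open>X \<subseteq> S\<close> l SD by (metis subset_antisym)
      ultimately show False using l Y by auto
    qed
    then show ?L using l by auto
  next
    assume r: "X \<subseteq> S \<and> Y \<subseteq> U - S \<and> \<not> (U - S \<subseteq> Y)"
    then obtain u where u: "u \<in> U" "u \<notin> S" "u \<notin> Y" by auto
    have "X \<in> insert S \<Delta>" using r sm by blast
    moreover have "X \<union> Y \<noteq> U" using u r by auto
    moreover have "U - Y \<noteq> S" using u by auto
    moreover have "U - Y \<notin> \<Delta>"
    proof
      assume "U - Y \<in> \<Delta>"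
      moreover have "S \<subseteq> U - Y" using r SU by auto
      ultimately show False using dc SD by blast
    qed
    ultimately show ?L using r by auto
  qed
qed

lemma link_sets:
  fixes X Y S U :: "nat set"
  assumes dc: "\<And>A B. B \<in> \<Delta> \<Longrightarrow> A \<subseteq> B \<Longrightarrow> A \<in> \<Delta>" and sub: "\<And>B. B \<in> \<Delta> \<Longrightarrow> B \<subseteq> U"
    and SU: "S \<subseteq> U" and SD: "S \<notin> \<Delta>" and sm: "\<And>T. T \<subset> S \<Longrightarrow> T \<in> \<Delta>" and UD: "U \<notin> \<Delta>"
  shows "((X \<in> \<Delta> \<and> Y \<subseteq> U \<and> X \<inter> Y = {} \<and> X \<union> Y \<noteq> U \<and> U - Y \<notin> \<Delta>) \<and> Y \<inter> (U - S) = {} \<and>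
          (X \<in> \<Delta> \<and> Y \<union> (U - S) \<subseteq> U \<and> X \<inter> (Y \<union> (U - S)) = {} \<and> X \<union> (Y \<union> (U - S)) \<noteq> U \<and> U - (Y \<union> (U - S)) \<notin> \<Delta>))
     \<longleftrightarrow> (X \<subseteq> S \<and> Y = {} \<and> X \<noteq> S)" (is "?L \<longleftrightarrow> ?R")
proof
  assume L: ?L
  have YS: "Y \<subseteq> S" using L by auto
  have e: "U - (Y \<union> (U - S)) = S - Y" using SU by auto
  have "Y = {}"
  proof (rule ccontr)
    assume "Y \<noteq> {}"
    then have "S - Y \<subset> S" using YS by auto
    then have "S - Y \<in> \<Delta>" by (rule sm)
    then show False using L e by simp
  qed
  moreover have "X \<subseteq> U" using L sub by auto
  then have "X \<subseteq> S" using L by auto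
  moreover have "X \<noteq> S" using L SD by auto
  ultimately show ?R by simp
next
  assume R: ?R
  then have XS: "X \<subset> S" and Y: "Y = {}" by auto
  have XD: "X \<in> \<Delta>" using sm XS by simp
  obtain s where s: "s \<in> S" "s \<notin> X" using XS by auto
  have "X \<noteq> U" using XS SU by auto
  moreover have "X \<union> (U - S) \<noteq> U" using s SU by auto
  moreover have "U - (U - S) = S" using SU by auto
  ultimately show ?L using XD Y UD SD XS by auto
qed



lemma pi_empty: "proper_ideal n \<Delta> \<Longrightarrow> {} \<in> \<Delta>"
  unfolding proper_ideal_def by blast

lemma flip_add:
  assumes pi: "proper_ideal n \<Delta>" and SU: "S \<subseteq> {1..n}" and Sn: "S \<noteq> {1..n}" and Se: "S \<noteq> {}"
    and SD: "S \<notin> \<Delta>" and sm: "\<And>T. T \<subset> S \<Longrightarrow> T \<in> \<Delta>"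
  shows "bistellar_flip (n - 2) (card S - 1) (bier n \<Delta>) (bier n (insert S \<Delta>))"
proof -
  define U where "U = {1..n}"
  have dc: "\<And>A B. B \<in> \<Delta> \<Longrightarrow> A \<subseteq> B \<Longrightarrow> A \<in> \<Delta>" using proper_ideal_dc[OF pi] by blast
  have sub: "\<And>B. B \<in> \<Delta> \<Longrightarrow> B \<subseteq> U" using proper_ideal_sub[OF pi] unfolding U_def by blast
  have UD: "U \<notin> \<Delta>" using pi unfolding proper_ideal_def U_def by blast
  have eD: "{} \<in> \<Delta>" using pi_empty[OF pi] .
  have SU': "S \<subseteq> U" using SU unfolding U_def .
  have fS: "finite S" using SU by (rule finite_subset) simp
  have s1: "1 \<le> card S" using fS Se by (simp add: Suc_le_eq card_gt_0_iff)
  have "S \<subset> {1..n}" using SU Sn by auto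
  then have sn: "card S < n" using psubset_card_mono[of "{1..n}" S] by simp
  define A :: "(nat + nat) set" where "A = Inr ` (U - S)"
  define B :: "(nat + nat) set" where "B = Inl ` S"
  have subI: "\<forall>B\<in>insert S \<Delta>. B \<subseteq> {1..n}" using sub SU unfolding U_def by auto
  have subD: "\<forall>B\<in>\<Delta>. B \<subseteq> {1..n}" using sub unfolding U_def by auto
  have lvA: "lv A = {}" "rv A = U - S" unfolding A_def by simp_all
  have lvB: "lv B = S" "rv B = {}" unfolding B_def by simp_all
  have i_le: "card S - 1 \<le> n - 2" using sn s1 by simp
  have AG: "A \<in> bier n \<Delta>"
  proof -
    have "U - (U - S) = S" using SU' by auto
    moreover have "U - S \<noteq> U" using Se SU' by auto
    ultimately show ?thesis unfolding bier_mem[OF subD] lvA U_def[symmetric] using eD SD by auto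
  qed
  have cA: "card A = n - 2 - (card S - 1) + 1"
  proof -
    have "card A = card (U - S)" unfolding A_def by (simp add: card_image)
    also have "\<dots> = n - card S" unfolding U_def using SU fS by (simp add: card_Diff_subset)
    finally show ?thesis using sn s1 by simp
  qed
  have cB: "card B = card S - 1 + 1" unfolding B_def using s1 by (simp add: card_image)
  have fA: "finite A" unfolding A_def U_def by simp
  have fB: "finite B" unfolding B_def using fS by simp
  have dj: "A \<inter> B = {}" unfolding A_def B_def by auto
  have BG: "B \<notin> bier n \<Delta>" unfolding bier_mem[OF subD] lvB using SD by simp
  have lk: "link (bier n \<Delta>) A = bdry B"
  proof (rule set_eqI)
    fix F :: "(nat + nat) set"
    have "F \<in> link (bier n \<Delta>) A \<longleftrightarrow> F \<in> bier n \<Delta> \<and> F \<inter> A = {} \<and> F \<union> A \<in> bier n \<Delta>"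
      unfolding link_def by simp
    also have "F \<inter> A = {} \<longleftrightarrow> rv F \<inter> (U - S) = {}"
      by (subst lr_empty) (simp add: lvA)
    also have "F \<in> bier n \<Delta> \<and> rv F \<inter> (U - S) = {} \<and> F \<union> A \<in> bier n \<Delta> \<longleftrightarrow>
       ((lv F \<in> \<Delta> \<and> rv F \<subseteq> U \<and> lv F \<inter> rv F = {} \<and> lv F \<union> rv F \<noteq> U \<and> U - rv F \<notin> \<Delta>) \<and> rv F \<inter> (U - S) = {} \<and>
          (lv F \<in> \<Delta> \<and> rv F \<union> (U - S) \<subseteq> U \<and> lv F \<inter> (rv F \<union> (U - S)) = {} \<and> lv F \<union> (rv F \<union> (U - S)) \<noteq> U \<and> U - (rv F \<union> (U - S)) \<notin> \<Delta>))"
      unfolding bier_mem[OF subD] U_def[symmetric] by (simp add: lvA)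
    also have "\<dots> \<longleftrightarrow> (lv F \<subseteq> S \<and> rv F = {} \<and> lv F \<noteq> S)"
      by (rule link_sets[OF dc sub SU' SD sm UD])
    also have "\<dots> \<longleftrightarrow> F \<in> bdry B"
    proof -
      have a: "F \<subseteq> B \<longleftrightarrow> lv F \<subseteq> S \<and> rv F = {}" using lr_sub[of F B] lvB by auto
      have b: "F = B \<longleftrightarrow> lv F = S \<and> rv F = {}" using lr_eq[of F B] lvB by auto
      show ?thesis unfolding bdry_def mem_Collect_eq psubset_eq a b by auto
    qed
    finally show "F \<in> link (bier n \<Delta>) A \<longleftrightarrow> F \<in> bdry B" .
  qed
  have G': "bier n (insert S \<Delta>) = (bier n \<Delta> - join (Pow A) (bdry B)) \<union> join (bdry A) (Pow B)"
  proof (rule set_eqI)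
    fix F :: "(nat + nat) set"
    have e1: "F \<subseteq> A \<union> B \<longleftrightarrow> lv F \<subseteq> S \<and> rv F \<subseteq> U - S"
      unfolding lr_sub[of F] by (simp add: lvA lvB)
    have e2: "B \<subseteq> F \<longleftrightarrow> S \<subseteq> lv F" unfolding lr_sub[of B] by (simp add: lvB)
    have e3: "A \<subseteq> F \<longleftrightarrow> U - S \<subseteq> rv F" unfolding lr_sub[of A] by (simp add: lvA)
    show "F \<in> bier n (insert S \<Delta>) \<longleftrightarrow> F \<in> (bier n \<Delta> - join (Pow A) (bdry B)) \<union> join (bdry A) (Pow B)"
      unfolding join_Pow_bdry[OF dj] join_bdry_Pow[OF dj] bier_mem[OF subI] bier_mem[OF subD]
        U_def[symmetric] mem_Collect_eq Un_iff Diff_iff e1 e2 e3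
      using ins_sets[OF dc sub SU' SD sm, where X="lv F" and Y="rv F"] by (simp only: conj_assoc)
  qed
  show ?thesis unfolding bistellar_flip_def
    using i_le AG fA cA fB cB dj BG lk G' by blast
qed



lemma bier_base:
  "bier n {{}} = bdry (Inr ` {1..n})"
proof (rule set_eqI)
  fix F :: "(nat + nat) set"
  have a: "F \<subseteq> Inr ` {1..n} \<longleftrightarrow> lv F = {} \<and> rv F \<subseteq> {1..n}" using lr_sub[of F "Inr ` {1..n}"] by auto
  have b: "F = Inr ` {1..n} \<longleftrightarrow> lv F = {} \<and> rv F = {1..n}" using lr_eq[of F "Inr ` {1..n}"] by auto
  have c: "rv F \<subseteq> {1..n} \<Longrightarrow> {1..n} - rv F = {} \<longleftrightarrow> rv F = {1..n}" by auto
  show "F \<in> bier n {{}} \<longleftrightarrow> F \<in> bdry (Inr ` {1..n})"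
    unfolding bier_mem[of "{{}}" n, simplified] bdry_def mem_Collect_eq psubset_eq a b
    using c by auto
qed

lemma build:
  assumes k2: "2 \<le> k"
  shows "proper_ideal n \<Delta> \<Longrightarrow> (\<forall>S\<in>\<Delta>. card S < k) \<Longrightarrow> (flip_step (n - 2) k)\<^sup>*\<^sup>* (bdry (Inr ` {1..n})) (bier n \<Delta>)"
proof (induction "card \<Delta>" arbitrary: \<Delta> rule: less_induct)
  case less
  note pi = less.prems(1)
  have finD: "finite \<Delta>" using proper_ideal_fin[OF pi] .
  have dc: "\<And>A B. B \<in> \<Delta> \<Longrightarrow> A \<subseteq> B \<Longrightarrow> A \<in> \<Delta>" using proper_ideal_dc[OF pi] by blast
  have sub: "\<And>B. B \<in> \<Delta> \<Longrightarrow> B \<subseteq> {1..n}" using proper_ideal_sub[OF pi] by blast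
  have eD: "{} \<in> \<Delta>" using pi_empty[OF pi] .
  have UD: "{1..n} \<notin> \<Delta>" using pi unfolding proper_ideal_def by blast
  show ?case
  proof (cases "\<Delta> = {{}}")
    case True
    then show ?thesis using bier_base by simp
  next
    case False
    then obtain T where T: "T \<in> \<Delta>" "T \<noteq> {}" using eD by blast
    define m where "m = Max (card ` \<Delta>)"
    have "m \<in> card ` \<Delta>" unfolding m_def using finD eD by (intro Max_in) auto
    then obtain S where S: "S \<in> \<Delta>" "card S = m" by auto
    have mx: "\<And>T. T \<in> \<Delta> \<Longrightarrow> card T \<le> card S" unfolding S(2) m_def using finD by simp
    have fin_el: "\<And>T. T \<in> \<Delta> \<Longrightarrow> finite T" using sub by (meson finite_atLeastAtMost finite_subset)
    have "0 < card T" using T fin_el by (simp add: card_gt_0_iff)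
    then have "0 < card S" using mx[OF T(1)] by simp
    then have Se: "S \<noteq> {}" by auto
    have maxS: "\<And>A. A \<in> \<Delta> \<Longrightarrow> S \<subseteq> A \<Longrightarrow> A = S"
    proof (rule ccontr)
      fix A assume A: "A \<in> \<Delta>" "S \<subseteq> A" "A \<noteq> S"
      then have "card S < card A" using fin_el[OF A(1)] by (intro psubset_card_mono) auto
      then show False using mx[OF A(1)] by simp
    qed
    define \<Delta>' where "\<Delta>' = \<Delta> - {S}"
    have pi': "proper_ideal n \<Delta>'"
      unfolding proper_ideal_def
    proof (intro conjI)
      show "\<Delta>' \<noteq> {}" unfolding \<Delta>'_def using eD Se by blast
      show "\<Delta>' \<subseteq> Pow {1..n}" unfolding \<Delta>'_def using sub by blast
      show "\<forall>A\<in>\<Delta>'. \<forall>B. B \<subseteq> A \<longrightarrow> B \<in> \<Delta>'"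
      proof (intro ballI allI impI)
        fix A B assume A: "A \<in> \<Delta>'" and BA: "B \<subseteq> A"
        have "B \<in> \<Delta>" using A BA dc unfolding \<Delta>'_def by blast
        moreover have "B \<noteq> S" using maxS A BA unfolding \<Delta>'_def by blast
        ultimately show "B \<in> \<Delta>'" unfolding \<Delta>'_def by blast
      qed
      show "{1..n} \<notin> \<Delta>'" unfolding \<Delta>'_def using UD by blast
    qed
    have "card \<Delta>' < card \<Delta>" unfolding \<Delta>'_def using finD S(1) by (rule card_Diff1_less)
    moreover have "\<forall>S\<in>\<Delta>'. card S < k" using less.prems(2) unfolding \<Delta>'_def by blast
    ultimately have r: "(flip_step (n - 2) k)\<^sup>*\<^sup>* (bdry (Inr ` {1..n})) (bier n \<Delta>')"
      using less.hyps pi' by blast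
    have SU: "S \<subseteq> {1..n}" using sub S(1) .
    have Sn: "S \<noteq> {1..n}" using UD S(1) by blast
    have SD': "S \<notin> \<Delta>'" unfolding \<Delta>'_def by blast
    have sm: "\<And>T. T \<subset> S \<Longrightarrow> T \<in> \<Delta>'" unfolding \<Delta>'_def using dc S(1) by blast
    have ins: "insert S \<Delta>' = \<Delta>" unfolding \<Delta>'_def using S(1) by blast
    have fl: "bistellar_flip (n - 2) (card S - 1) (bier n \<Delta>') (bier n \<Delta>)"
      using flip_add[OF pi' SU Sn Se SD' sm] ins by simp
    have "card S < k" using less.prems(2) S(1) by blast
    then have "card S - 1 \<le> k - 2" using \<open>0 < card S\<close> by simp
    then have "flip_step (n - 2) k (bier n \<Delta>') (bier n \<Delta>)" unfolding flip_step_def using fl by blast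
    then show ?thesis using r by (rule rtranclp.rtrancl_into_rtrancl[rotated])
  qed
qed



definition dual :: "nat \<Rightarrow> nat set set \<Rightarrow> nat set set" where
  "dual n \<Delta> = {D. D \<subseteq> {1..n} \<and> {1..n} - D \<notin> \<Delta>}"

definition sw :: "('a + 'b) \<Rightarrow> ('b + 'a)" where "sw = case_sum Inr Inl"

lemma sw_sw[simp]: "sw (sw x) = x" unfolding sw_def by (cases x) auto
lemma sw_img_img[simp]: "sw ` (sw ` F) = F" by (simp add: image_image)
lemma inj_sw: "inj sw" by (metis injI sw_sw)
lemma lv_sw[simp]: "lv (sw ` F) = rv F" unfolding lv_def rv_def sw_def by (force split: sum.splits)
lemma rv_sw[simp]: "rv (sw ` F) = lv F" unfolding lv_def rv_def sw_def by (force split: sum.splits)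

lemma dual_pi:
  assumes pi: "proper_ideal n \<Delta>" shows "proper_ideal n (dual n \<Delta>)"
  unfolding proper_ideal_def
proof (intro conjI)
  have dc: "\<And>A B. B \<in> \<Delta> \<Longrightarrow> A \<subseteq> B \<Longrightarrow> A \<in> \<Delta>" using proper_ideal_dc[OF pi] by blast
  have UD: "{1..n} \<notin> \<Delta>" using pi unfolding proper_ideal_def by blast
  have eD: "{} \<in> \<Delta>" using pi_empty[OF pi] .
  show "dual n \<Delta> \<noteq> {}" unfolding dual_def using UD by auto
  show "dual n \<Delta> \<subseteq> Pow {1..n}" unfolding dual_def by auto
  show "\<forall>A\<in>dual n \<Delta>. \<forall>B. B \<subseteq> A \<longrightarrow> B \<in> dual n \<Delta>"
  proof (intro ballI allI impI)
    fix A B assume A: "A \<in> dual n \<Delta>" and BA: "B \<subseteq> A"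
    have "{1..n} - B \<notin> \<Delta>"
    proof
      assume "{1..n} - B \<in> \<Delta>"
      then have "{1..n} - A \<in> \<Delta>" using dc[of "{1..n} - B" "{1..n} - A"] BA by auto
      then show False using A unfolding dual_def by auto
    qed
    then show "B \<in> dual n \<Delta>" using A BA unfolding dual_def by auto
  qed
  show "{1..n} \<notin> dual n \<Delta>" unfolding dual_def using eD by auto
qed

lemma bier_dual:
  assumes pi: "proper_ideal n \<Delta>"
  shows "bier n \<Delta> = (\<lambda>F. sw ` F) ` bier n (dual n \<Delta>)"
proof (rule set_eqI)
  fix F :: "(nat + nat) set"
  have subD: "\<forall>B\<in>\<Delta>. B \<subseteq> {1..n}" using proper_ideal_sub[OF pi] by blast
  have subDD: "\<forall>B\<in>dual n \<Delta>. B \<subseteq> {1..n}" unfolding dual_def by blast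
  have "F \<in> (\<lambda>F. sw ` F) ` bier n (dual n \<Delta>) \<longleftrightarrow> sw ` F \<in> bier n (dual n \<Delta>)"
  proof
    assume "F \<in> (\<lambda>F. sw ` F) ` bier n (dual n \<Delta>)"
    then obtain G where "G \<in> bier n (dual n \<Delta>)" "F = sw ` G" by blast
    then show "sw ` F \<in> bier n (dual n \<Delta>)" by simp
  next
    assume "sw ` F \<in> bier n (dual n \<Delta>)"
    moreover have "F = sw ` (sw ` F)" by simp
    ultimately show "F \<in> (\<lambda>F. sw ` F) ` bier n (dual n \<Delta>)" by blast
  qed
  also have "\<dots> \<longleftrightarrow> F \<in> bier n \<Delta>"
  proof -
    have e: "lv F \<subseteq> {1..n} \<Longrightarrow> {1..n} - ({1..n} - lv F) = lv F" by auto
    show ?thesis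
      unfolding bier_mem[OF subD] bier_mem[OF subDD] lv_sw rv_sw
      unfolding dual_def mem_Collect_eq
      using e subD by auto
  qed
  finally show "F \<in> bier n \<Delta> \<longleftrightarrow> F \<in> (\<lambda>F. sw ` F) ` bier n (dual n \<Delta>)" by simp
qed

lemma cx_iso_GG:
  assumes iso: "cx_iso \<Gamma> \<Gamma>'"
  shows "GG n k \<Gamma>' = GG n k \<Gamma>"
proof -
  obtain g where g: "inj_on g (\<Union>\<Gamma>)" and e: "(\<lambda>F. g ` F) ` \<Gamma> = \<Gamma>'" using iso unfolding cx_iso_def by blast
  have inj: "inj_on (\<lambda>F. g ` F) \<Gamma>"
  proof (rule inj_onI)
    fix F G assume "F \<in> \<Gamma>" "G \<in> \<Gamma>" "g ` F = g ` G"
    then show "F = G" using inj_on_image_eq_iff[OF g] by blast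
  qed
  have c: "\<And>F. F \<in> \<Gamma> \<Longrightarrow> card (g ` F) = card F"
    using g by (meson Union_upper card_image inj_on_subset)
  show ?thesis unfolding GG_def e[symmetric] sum.reindex[OF inj] using c by simp
qed

lemma small_sets:
  assumes pi: "proper_ideal n \<Delta>" and f0: "fnum \<Delta> k = 0"
  shows "\<forall>S\<in>\<Delta>. card S < k"
proof (rule ccontr)
  assume "\<not> (\<forall>S\<in>\<Delta>. card S < k)"
  then obtain S where S: "S \<in> \<Delta>" "k \<le> card S" by auto
  then obtain X where X: "X \<subseteq> S" "card X = k" "finite X" by (meson obtain_subset_with_card_n)
  have "X \<in> \<Delta>" using proper_ideal_dc[OF pi S(1) X(1)] .
  then have "{X \<in> \<Delta>. card X = k} \<noteq> {}" using X by auto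
  moreover have "finite {X \<in> \<Delta>. card X = k}" using proper_ideal_fin[OF pi] by simp
  ultimately have "0 < card {X \<in> \<Delta>. card X = k}" by (simp only: card_gt_0_iff) simp
  then show False using f0 unfolding fnum_def by linarith
qed

lemma dual_f0:
  assumes pi: "proper_ideal n \<Delta>" and kn: "k \<le> n" and full: "fnum \<Delta> (n - k) = n choose k"
  shows "fnum (dual n \<Delta>) k = 0"
proof -
  have sub: "\<And>B. B \<in> \<Delta> \<Longrightarrow> B \<subseteq> {1..n}" using proper_ideal_sub[OF pi] by blast
  define Lnk where "Lnk = {T. T \<subseteq> {1..n} \<and> card T = n - k}"
  have cL: "card Lnk = n choose k" unfolding Lnk_def using card_level[of n "n - k"] kn
    by (simp add: binomial_symmetric[of k n])
  have finL: "finite Lnk" unfolding Lnk_def by (rule finite_subset[of _ "Pow {1..n}"]) auto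
  have FL: "{T \<in> \<Delta>. card T = n - k} \<subseteq> Lnk" unfolding Lnk_def using sub by auto
  have "{T \<in> \<Delta>. card T = n - k} = Lnk" using card_subset_eq[OF finL FL] full cL unfolding fnum_def by simp
  then have LD: "Lnk \<subseteq> \<Delta>" by auto
  have "{D \<in> dual n \<Delta>. card D = k} = {}"
  proof (rule ccontr)
    assume "{D \<in> dual n \<Delta>. card D = k} \<noteq> {}"
    then obtain D where D: "D \<subseteq> {1..n}" "{1..n} - D \<notin> \<Delta>" "card D = k" unfolding dual_def by auto
    have "finite D" using D(1) by (rule finite_subset) simp
    then have "card ({1..n} - D) = n - k" using D by (simp add: card_Diff_subset)
    then have "{1..n} - D \<in> Lnk" unfolding Lnk_def by auto
    then show False using LD D(2) by auto
  qed
  then show ?thesis unfolding fnum_def by (metis card.empty)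
qed



theorem corollary14:
  fixes n k :: nat and \<Delta> :: "nat set set"
  assumes "n \<ge> 5" and "proper_ideal n \<Delta>" and "2 \<le> k" and "k \<le> (n - 1) div 2"
  shows "(gnum (n - 1) (bier n \<Delta>) k = 0 \<longleftrightarrow>
            (fnum \<Delta> k = 0 \<or> fnum \<Delta> (n - k) = n choose k))
       \<and> ((fnum \<Delta> k = 0 \<or> fnum \<Delta> (n - k) = n choose k) \<longleftrightarrow>
            (\<exists>(V :: (nat + nat) set) \<Gamma>. finite V \<and> card V = n \<and>
               (flip_step (n - 2) k)\<^sup>*\<^sup>* (bdry V) \<Gamma> \<and> cx_iso \<Gamma> (bier n \<Delta>)))"
proof -
  note pi = assms(2)
  have k2: "2 \<le> k" using assms(3) .
  have k1: "1 \<le> k" using k2 by simp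
  have kn: "2 * k + 1 \<le> n" using assms(1,4) by presburger
  have bf: "finite (bier n \<Delta>)" "\<forall>F\<in>bier n \<Delta>. card F \<le> n - 1" using bier_fin_card[OF pi] by auto
  have gG: "gnum (n - 1) (bier n \<Delta>) k = GG n k (bier n \<Delta>)"
    by (rule gnum_GG[OF bf]) (use k1 kn in auto)
  have GB: "GG n k (bier n \<Delta>) = int (fnum \<Delta> k) - int (fnum \<Delta> (n - k))"
    by (rule GG_bier[OF pi k1]) (use kn in simp)
  have sh: "(fnum \<Delta> k = fnum \<Delta> (n - k)) \<longleftrightarrow> (fnum \<Delta> k = 0 \<or> fnum \<Delta> (n - k) = n choose k)"
    by (rule shadow[OF pi k1 kn])
  have P1: "gnum (n - 1) (bier n \<Delta>) k = 0 \<longleftrightarrow> (fnum \<Delta> k = 0 \<or> fnum \<Delta> (n - k) = n choose k)"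
    unfolding gG GB sh[symmetric] by simp
  have P2: "(fnum \<Delta> k = 0 \<or> fnum \<Delta> (n - k) = n choose k) \<longleftrightarrow>
            (\<exists>(V :: (nat + nat) set) \<Gamma>. finite V \<and> card V = n \<and>
               (flip_step (n - 2) k)\<^sup>*\<^sup>* (bdry V) \<Gamma> \<and> cx_iso \<Gamma> (bier n \<Delta>))"
  proof
    assume c: "fnum \<Delta> k = 0 \<or> fnum \<Delta> (n - k) = n choose k"
    have fV: "finite (Inr ` {1..n} :: (nat + nat) set)" by simp
    have cV: "card (Inr ` {1..n} :: (nat + nat) set) = n" by (simp add: card_image)
    from c show "\<exists>(V :: (nat + nat) set) \<Gamma>. finite V \<and> card V = n \<and>
               (flip_step (n - 2) k)\<^sup>*\<^sup>* (bdry V) \<Gamma> \<and> cx_iso \<Gamma> (bier n \<Delta>)"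
    proof
      assume f0: "fnum \<Delta> k = 0"
      have r: "(flip_step (n - 2) k)\<^sup>*\<^sup>* (bdry (Inr ` {1..n})) (bier n \<Delta>)"
        by (rule build[OF k2 pi small_sets[OF pi f0]])
      have "cx_iso (bier n \<Delta>) (bier n \<Delta>)" unfolding cx_iso_def
        by (rule exI[of _ id]) simp
      then show ?thesis using fV cV r by blast
    next
      assume full: "fnum \<Delta> (n - k) = n choose k"
      have pid: "proper_ideal n (dual n \<Delta>)" by (rule dual_pi[OF pi])
      have f0: "fnum (dual n \<Delta>) k = 0" by (rule dual_f0[OF pi _ full]) (use kn in simp)
      have r: "(flip_step (n - 2) k)\<^sup>*\<^sup>* (bdry (Inr ` {1..n})) (bier n (dual n \<Delta>))"
        by (rule build[OF k2 pid small_sets[OF pid f0]])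
      have "cx_iso (bier n (dual n \<Delta>)) (bier n \<Delta>)" unfolding cx_iso_def
      proof (rule exI[of _ sw], rule conjI)
        show "inj_on sw (\<Union> (bier n (dual n \<Delta>)))" using inj_sw by (rule inj_on_subset) simp
        show "(\<lambda>F. sw ` F) ` bier n (dual n \<Delta>) = bier n \<Delta>" using bier_dual[OF pi] by simp
      qed
      then show ?thesis using fV cV r by blast
    qed
  next
    assume "\<exists>(V :: (nat + nat) set) \<Gamma>. finite V \<and> card V = n \<and>
               (flip_step (n - 2) k)\<^sup>*\<^sup>* (bdry V) \<Gamma> \<and> cx_iso \<Gamma> (bier n \<Delta>)"
    then obtain V :: "(nat + nat) set" and \<Gamma> where V: "finite V" "card V = n"
      and r: "(flip_step (n - 2) k)\<^sup>*\<^sup>* (bdry V) \<Gamma>" and iso: "cx_iso \<Gamma> (bier n \<Delta>)" by blast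
    have "GG n k \<Gamma> = 0" using reach_good[OF r V k2 kn] by simp
    then have "GG n k (bier n \<Delta>) = 0" using cx_iso_GG[OF iso] by simp
    then have "fnum \<Delta> k = fnum \<Delta> (n - k)" unfolding GB by simp
    then show "fnum \<Delta> k = 0 \<or> fnum \<Delta> (n - k) = n choose k" using sh by simp
  qed
  show ?thesis using P1 P2 by blast
qed


end
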